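(* Let $Q$ be an acyclic quiver equipped with a group $G$ of admissible automorphisms. Then for every object $M$ of the cluster category $\mathcal C_Q$ and every $g\in G$, $X_{gM}=g\,X_M$.
   Context: $k=\mathbb C$; $Q$ a finite quiver without oriented cycles with vertex set $Q_0$; $G$ acts on $Q$ by quiver automorphisms (permutations of vertices and arrows compatible with sources and targets), admissibly: for distinct $i,j$ in the same $G$-orbit there is no path of length $1$ or $2$ from $i$ to $j$. $G$ acts on representations by $(gV)(i)=V(g^{-1}i)$, $(gV)(\alpha)=V(g^{-1}\alpha)$ and on morphisms by $(gf)_i=f_{g^{-1}i}$; these auto-equivalences of $kQ$-mod induce auto-equivalences of $D^b(kQ\text{-mod})$ commuting with $[1]$ and $\tau$, hence of $\mathcal C_Q$, with $gP_i[1]\cong P_{gi}[1]$. $\mathcal C_Q$ is the orbit category of $D^b(kQ\text{-mod})$ under $\tau^{-1}[1]$; its indecomposables are the indecomposable $kQ$-modules and the $P_i[1]$ ($P_i$ the indecomposable projective at $i$). The Caldero–Chapoton map $X_?:\mathrm{Ob}(\mathcal C_Q)\to\mathbb Z[u_i^{\pm1}:i\in Q_0]$ is given by $X_{M\oplus N}=X_MX_N$, $X_{P_i[1]}=u_i$, and for a $kQ$-module $M$, $X_M=\sum_{\mathbf e}\chi(\mathrm{Gr}_{\mathbf e}(M))\prod_{i}u_i^{-\langle\mathbf e,\alpha_i\rangle-\langle\alpha_i,\mathbf{dim}M-\mathbf e\rangle}$, where $\mathrm{Gr}_{\mathbf e}(M)$ is the variety of submodules with dimension vector $\mathbf e$,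 $\chi$ Euler characteristic, $\langle\cdot,\cdot\rangle$ the Euler form and $\alpha_i$ the $i$-th standard basis vector. $G$ acts on $\mathbb Z[u_i^{\pm1}]$ by ring automorphisms $gu_i=u_{gi}$. *)

theory Defs
  imports "HOL-Homology.Homology" "HOL-Library.Poly_Mapping" "HOL-Library.Function_Algebras"
begin

definition quiver_path :: "('e \<Rightarrow> 'v) \<Rightarrow> ('e \<Rightarrow> 'v) \<Rightarrow> 'v \<Rightarrow> 'v \<Rightarrow> 'e list \<Rightarrow> bool" where
  "quiver_path src tgt i j p \<longleftrightarrow> p \<noteq> [] \<and> src (hd p) = i \<and> tgt (last p) = j \<and>
     (\<forall>k. Suc k < length p \<longrightarrow> tgt (p ! k) = src (p ! Suc k))"

definition acyclic_quiver :: "('e \<Rightarrow> 'v) \<Rightarrow> ('e \<Rightarrow> 'v) \<Rightarrow> bool" where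
  "acyclic_quiver src tgt \<longleftrightarrow> (\<nexists>i p. quiver_path src tgt i i p)"

definition quiver_group_action ::
  "('g, 'b) monoid_scheme \<Rightarrow> ('g \<Rightarrow> 'v \<Rightarrow> 'v) \<Rightarrow> ('g \<Rightarrow> 'e \<Rightarrow> 'e) \<Rightarrow> ('e \<Rightarrow> 'v) \<Rightarrow> ('e \<Rightarrow> 'v) \<Rightarrow> bool" where
  "quiver_group_action G vact aact src tgt \<longleftrightarrow> group G \<and>
     (\<forall>g\<in>carrier G. bij (vact g) \<and> bij (aact g) \<and>
        (\<forall>\<alpha>. src (aact g \<alpha>) = vact g (src \<alpha>) \<and> tgt (aact g \<alpha>) = vact g (tgt \<alpha>))) \<and>
     vact \<one>\<^bsub>G\<^esub> = id \<and> aact \<one>\<^bsub>G\<^esub> = id \<and>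
     (\<forall>g\<in>carrier G. \<forall>h\<in>carrier G. vact (g \<otimes>\<^bsub>G\<^esub> h) = vact g \<circ> vact h \<and>
                                      aact (g \<otimes>\<^bsub>G\<^esub> h) = aact g \<circ> aact h)"

definition admissible_action ::
  "('g, 'b) monoid_scheme \<Rightarrow> ('g \<Rightarrow> 'v \<Rightarrow> 'v) \<Rightarrow> ('g \<Rightarrow> 'e \<Rightarrow> 'e) \<Rightarrow> ('e \<Rightarrow> 'v) \<Rightarrow> ('e \<Rightarrow> 'v) \<Rightarrow> bool" where
  "admissible_action G vact aact src tgt \<longleftrightarrow> quiver_group_action G vact aact src tgt \<and>
     (\<forall>g\<in>carrier G. \<forall>i p. vact g i \<noteq> i \<longrightarrow> quiver_path src tgt i (vact g i) p \<longrightarrow> length p \<notin> {1, 2})"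

text \<open>A finite-dimensional representation: a dimension vector d and, for each arrow a,
  a d(tgt a) x d(src a) complex matrix (entries outside that range are ignored).\<close>
type_synonym ('v, 'e) qrep = "('v \<Rightarrow> nat) \<times> ('e \<Rightarrow> nat \<Rightarrow> nat \<Rightarrow> complex)"

text \<open>Objects of the cluster category: M \<oplus> (\<Oplus>_i P_i[1]^{m i}), with M a kQ-module.\<close>
type_synonym ('v, 'e) cc_obj = "('v, 'e) qrep \<times> ('v \<Rightarrow> nat)"

definition rep_act :: "('g, 'b) monoid_scheme \<Rightarrow> ('g \<Rightarrow> 'v \<Rightarrow> 'v) \<Rightarrow> ('g \<Rightarrow> 'e \<Rightarrow> 'e) \<Rightarrow> 'g
    \<Rightarrow> ('v, 'e) qrep \<Rightarrow> ('v, 'e) qrep" where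
  "rep_act G vact aact g V = (fst V \<circ> vact (inv\<^bsub>G\<^esub> g), snd V \<circ> aact (inv\<^bsub>G\<^esub> g))"

definition obj_act :: "('g, 'b) monoid_scheme \<Rightarrow> ('g \<Rightarrow> 'v \<Rightarrow> 'v) \<Rightarrow> ('g \<Rightarrow> 'e \<Rightarrow> 'e) \<Rightarrow> 'g
    \<Rightarrow> ('v, 'e) cc_obj \<Rightarrow> ('v, 'e) cc_obj" where
  "obj_act G vact aact g X = (rep_act G vact aact g (fst X), snd X \<circ> vact (inv\<^bsub>G\<^esub> g))"

text \<open>A subspace U of C^n is encoded by its orthogonal projection matrix P (Hermitian, idempotent,
  trace = dim U). Gr_e(M) is the set of tuples (P_i) of such projections, with dim U_i = e_i,
  such that A_a U_{src a} \<subseteq> U_{tgt a}, i.e. P_{tgt a} A_a P_{src a} = A_a P_{src a};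
  it carries the Euclidean topology on the matrix entries.\<close>
definition is_proj :: "nat \<Rightarrow> nat \<Rightarrow> (nat \<Rightarrow> nat \<Rightarrow> complex) \<Rightarrow> bool" where
  "is_proj n k P \<longleftrightarrow> (\<forall>r c. (r \<ge> n \<or> c \<ge> n) \<longrightarrow> P r c = 0) \<and>
     (\<forall>r c. P r c = cnj (P c r)) \<and>
     (\<forall>r<n. \<forall>c<n. (\<Sum>l<n. P r l * P l c) = P r c) \<and>
     (\<Sum>l<n. P l l) = of_nat k"

definition grass_set :: "('e \<Rightarrow> 'v) \<Rightarrow> ('e \<Rightarrow> 'v) \<Rightarrow> ('v, 'e) qrep \<Rightarrow> ('v \<Rightarrow> nat)
    \<Rightarrow> ('v \<Rightarrow> nat \<Rightarrow> nat \<Rightarrow> complex) set" where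
  "grass_set src tgt M e = {P. (\<forall>i. is_proj (fst M i) (e i) (P i)) \<and>
     (\<forall>a. let ds = fst M (src a); dt = fst M (tgt a); A = snd M a;
              AP = (\<lambda>r c. \<Sum>l<ds. A r l * P (src a) l c) in
          \<forall>r<dt. \<forall>c<ds. (\<Sum>k<dt. P (tgt a) r k * AP k c) = AP r c)}"

definition matrix_tuple_topology :: "('v \<Rightarrow> nat \<Rightarrow> nat \<Rightarrow> complex) topology" where
  "matrix_tuple_topology =
     product_topology (\<lambda>i. product_topology (\<lambda>r. product_topology (\<lambda>c. euclidean) UNIV) UNIV) UNIV"

definition quiver_grassmannian :: "('e \<Rightarrow> 'v) \<Rightarrow> ('e \<Rightarrow> 'v) \<Rightarrow> ('v, 'e) qrep \<Rightarrow> ('v \<Rightarrow> nat)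
    \<Rightarrow> ('v \<Rightarrow> nat \<Rightarrow> nat \<Rightarrow> complex) topology" where
  "quiver_grassmannian src tgt M e = subtopology matrix_tuple_topology (grass_set src tgt M e)"

definition Z_independent :: "('a, 'b) monoid_scheme \<Rightarrow> 'a set \<Rightarrow> bool" where
  "Z_independent H S \<longleftrightarrow> finite S \<and> S \<subseteq> carrier H \<and>
     (\<forall>c :: 'a \<Rightarrow> int. finprod H (\<lambda>x. x [^]\<^bsub>H\<^esub> c x) S = \<one>\<^bsub>H\<^esub> \<longrightarrow> (\<forall>x\<in>S. c x = 0))"

definition group_rank :: "('a, 'b) monoid_scheme \<Rightarrow> nat" where
  "group_rank H = Sup {card S | S. Z_independent H S}"

definition betti :: "int \<Rightarrow> 'a topology \<Rightarrow> nat" where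
  "betti p X = group_rank (homology_group p X)"

definition euler_char :: "'a topology \<Rightarrow> int" where
  "euler_char X = (\<Sum>p\<in>{p. betti p X \<noteq> 0}. (-1) ^ nat \<bar>p\<bar> * int (betti p X))"

text \<open>Laurent polynomials in u_i (i :: 'v) are finitely supported maps from exponent
  vectors ('v \<Rightarrow> int) to coefficients; multiplication is the Poly_Mapping convolution.\<close>
type_synonym 'v laurent = "('v \<Rightarrow> int) \<Rightarrow>\<^sub>0 int"

definition lmonom :: "('v \<Rightarrow> int) \<Rightarrow> 'v laurent" where
  "lmonom a = Poly_Mapping.single a 1"

text \<open>Ring automorphism with u_i \<mapsto> u_{\<sigma> i}: u^a \<mapsto> u^(a \<circ> inv \<sigma>).\<close>
definition lact :: "('v \<Rightarrow> 'v) \<Rightarrow> 'v laurent \<Rightarrow> 'v laurent" where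
  "lact \<sigma> f = (\<Sum>a\<in>Poly_Mapping.keys f. Poly_Mapping.single (a \<circ> Hilbert_Choice.inv \<sigma>) (Poly_Mapping.lookup f a))"

definition euler_form :: "('e::finite \<Rightarrow> 'v) \<Rightarrow> ('e \<Rightarrow> 'v) \<Rightarrow> ('v::finite \<Rightarrow> int) \<Rightarrow> ('v \<Rightarrow> int) \<Rightarrow> int" where
  "euler_form src tgt a b = (\<Sum>i\<in>UNIV. a i * b i) - (\<Sum>\<alpha>\<in>UNIV. a (src \<alpha>) * b (tgt \<alpha>))"

definition unitvec :: "'v \<Rightarrow> 'v \<Rightarrow> int" where
  "unitvec i = (\<lambda>j. if j = i then 1 else 0)"

definition CC_module :: "('e::finite \<Rightarrow> 'v::finite) \<Rightarrow> ('e \<Rightarrow> 'v) \<Rightarrow> ('v, 'e) qrep \<Rightarrow> 'v laurent" where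
  "CC_module src tgt M = (\<Sum>e\<in>{e. \<forall>i. e i \<le> fst M i}.
     Poly_Mapping.single
       (\<lambda>i. - euler_form src tgt (int \<circ> e) (unitvec i)
            - euler_form src tgt (unitvec i) (\<lambda>j. int (fst M j) - int (e j)))
       (euler_char (quiver_grassmannian src tgt M e)))"

definition CC :: "('e::finite \<Rightarrow> 'v::finite) \<Rightarrow> ('e \<Rightarrow> 'v) \<Rightarrow> ('v, 'e) cc_obj \<Rightarrow> 'v laurent" where
  "CC src tgt X = CC_module src tgt (fst X) * lmonom (int \<circ> snd X)"

end

theory Submission
  imports Defs
begin


lemma hom_finprod_gen:
  assumes H: "comm_group H" and K: "comm_group K" and h: "h \<in> hom H K"
    and fin: "finite S" and f: "f \<in> S \<rightarrow> carrier H"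
  shows "h (finprod H f S) = finprod K (h \<circ> f) S"
  using fin f
proof (induction S rule: finite_induct)
  case empty
  have gH: "group H" and gK: "group K" using H K by (auto simp: comm_group_def)
  have "h \<one>\<^bsub>H\<^esub> = \<one>\<^bsub>K\<^esub>" using h gH gK
    by (simp add: group_hom.hom_one group_hom_axioms_def group_hom_def)
  moreover have "finprod H f {} = \<one>\<^bsub>H\<^esub>"
    by (rule comm_monoid.finprod_empty[OF comm_group.axioms(1)[OF H]])
  moreover have "finprod K (h \<circ> f) {} = \<one>\<^bsub>K\<^esub>"
    by (rule comm_monoid.finprod_empty[OF comm_group.axioms(1)[OF K]])
  ultimately show ?case by (simp only:)
next
  case (insert a F)
  have fa: "f a \<in> carrier H" and fF: "f \<in> F \<rightarrow> carrier H" using insert(4) by auto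
  have hfF: "h \<circ> f \<in> F \<rightarrow> carrier K" using fF hom_in_carrier[OF h] by (auto simp: Pi_iff)
  have hfa: "(h \<circ> f) a \<in> carrier K" using fa hom_in_carrier[OF h] by simp
  have ih: "h (finprod H f F) = finprod K (h \<circ> f) F" using insert(3)[OF fF] .
  have cl: "finprod H f F \<in> carrier H"
    by (rule comm_monoid.finprod_closed[OF comm_group.axioms(1)[OF H] fF])
  have "h (finprod H f (insert a F)) = h (f a \<otimes>\<^bsub>H\<^esub> finprod H f F)"
    by (simp only: comm_monoid.finprod_insert[OF comm_group.axioms(1)[OF H] insert(1) insert(2) fF fa])
  also have "\<dots> = h (f a) \<otimes>\<^bsub>K\<^esub> h (finprod H f F)"
    by (rule hom_mult[OF h fa cl])
  also have "\<dots> = (h \<circ> f) a \<otimes>\<^bsub>K\<^esub> finprod K (h \<circ> f) F"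
    by (simp only: ih comp_apply)
  also have "\<dots> = finprod K (h \<circ> f) (insert a F)"
    by (rule comm_monoid.finprod_insert[OF comm_group.axioms(1)[OF K] insert(1) insert(2) hfF hfa, symmetric])
  finally show ?case .
qed

lemma Z_independent_iso:
  assumes H: "comm_group H" and K: "comm_group K" and h: "h \<in> iso H K"
    and S: "Z_independent H S"
  shows "Z_independent K (h ` S) \<and> card (h ` S) = card S"
proof -
  have hh: "h \<in> hom H K" and bij: "bij_betw h (carrier H) (carrier K)" using h by (auto simp: iso_def)
  have fin: "finite S" and sub: "S \<subseteq> carrier H" using S by (auto simp: Z_independent_def)
  have inj: "inj_on h S" using bij sub by (meson bij_betw_def inj_on_subset)
  have gH: "group H" and gK: "group K" using H K by (auto simp: comm_group_def)
  have "Z_independent K (h ` S)"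
    unfolding Z_independent_def
  proof (intro conjI allI impI ballI)
    show "finite (h ` S)" using fin by simp
    show "h ` S \<subseteq> carrier K" using sub hh by (auto simp: hom_def)
    fix c :: "_ \<Rightarrow> int" and y
    assume eq: "finprod K (\<lambda>x. x [^]\<^bsub>K\<^esub> c x) (h ` S) = \<one>\<^bsub>K\<^esub>" and y: "y \<in> h ` S"
    have pw: "(\<lambda>x. x [^]\<^bsub>K\<^esub> c x) \<in> h ` S \<rightarrow> carrier K"
    proof
      fix x assume "x \<in> h ` S"
      then obtain z where z: "z \<in> S" "x = h z" by blast
      have "x \<in> carrier K" using z sub hom_in_carrier[OF hh] by blast
      then show "x [^]\<^bsub>K\<^esub> c x \<in> carrier K" by (rule group.int_pow_closed[OF gK])
    qed
    have "finprod K (\<lambda>x. x [^]\<^bsub>K\<^esub> c x) (h ` S) = finprod K (\<lambda>x. h x [^]\<^bsub>K\<^esub> c (h x)) S"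
      using comm_monoid.finprod_reindex[OF comm_group.axioms(1)[OF K] pw inj] .
    also have "\<dots> = finprod K (h \<circ> (\<lambda>x. x [^]\<^bsub>H\<^esub> c (h x))) S"
      apply (rule comm_monoid.finprod_cong'[OF comm_group.axioms(1)[OF K]])
      using sub hh gH gK
      by (auto simp: hom_int_pow[OF hh _ gH gK] intro!: group.int_pow_closed hom_in_carrier[OF hh])
    also have "\<dots> = h (finprod H (\<lambda>x. x [^]\<^bsub>H\<^esub> c (h x)) S)"
      by (rule hom_finprod_gen[OF H K hh fin, symmetric]) (use sub gH in \<open>auto intro: group.int_pow_closed\<close>)
    finally have calc: "finprod K (\<lambda>x. x [^]\<^bsub>K\<^esub> c x) (h ` S) = h (finprod H (\<lambda>x. x [^]\<^bsub>H\<^esub> c (h x)) S)" .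
    have e1: "h (finprod H (\<lambda>x. x [^]\<^bsub>H\<^esub> c (h x)) S) = \<one>\<^bsub>K\<^esub>"
      using calc[symmetric] eq by (rule trans)
    have c1: "finprod H (\<lambda>x. x [^]\<^bsub>H\<^esub> c (h x)) S \<in> carrier H"
      by (rule comm_monoid.finprod_closed[OF comm_group.axioms(1)[OF H]]) (use sub gH in \<open>auto intro: group.int_pow_closed\<close>)
    have "h \<one>\<^bsub>H\<^esub> = \<one>\<^bsub>K\<^esub>" using hh gH gK
      by (simp add: group_hom.hom_one group_hom_axioms_def group_hom_def)
    hence one: "finprod H (\<lambda>x. x [^]\<^bsub>H\<^esub> c (h x)) S = \<one>\<^bsub>H\<^esub>"
      proof -
      have ih: "inj_on h (carrier H)" using bij by (simp add: bij_betw_def)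
      have oc: "\<one>\<^bsub>H\<^esub> \<in> carrier H" using gH by (simp add: group.is_monoid monoid.one_closed)
      show ?thesis by (rule inj_onD[OF ih _ c1 oc]) (use e1 \<open>h \<one>\<^bsub>H\<^esub> = \<one>\<^bsub>K\<^esub>\<close> in simp)
    qed
    have zall: "\<forall>c'::'a \<Rightarrow> int. finprod H (\<lambda>x. x [^]\<^bsub>H\<^esub> c' x) S = \<one>\<^bsub>H\<^esub> \<longrightarrow> (\<forall>x\<in>S. c' x = 0)"
      using S unfolding Z_independent_def by (rule conjunct2[OF conjunct2])
    have imp: "finprod H (\<lambda>x. x [^]\<^bsub>H\<^esub> c (h x)) S = \<one>\<^bsub>H\<^esub> \<longrightarrow> (\<forall>x\<in>S. c (h x) = 0)"
      using spec[OF zall, of "\<lambda>x. c (h x)"] .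
    have all0: "\<forall>x\<in>S. c (h x) = 0" using mp[OF imp one] .
    obtain z where z: "z \<in> S" "y = h z" using y by blast
    show "c y = 0" using all0 z by simp
  qed
  then show ?thesis using inj by (simp add: card_image)
qed

lemma group_rank_iso:
  assumes H: "comm_group H" and K: "comm_group K" and iso: "H \<cong> K"
  shows "group_rank H = group_rank K"
proof -
  have sub: "{card S | S. Z_independent A S} \<subseteq> {card S | S. Z_independent B S}"
    if AB: "comm_group A" "comm_group B" "A \<cong> B" for A :: "('x,'y) monoid_scheme" and B :: "('z,'w) monoid_scheme"
  proof
    fix n assume "n \<in> {card S | S. Z_independent A S}"
    then obtain S where S: "Z_independent A S" "n = card S" by auto
    obtain h where "h \<in> iso A B" using AB(3) by (auto simp: is_iso_def)
    from Z_independent_iso[OF AB(1,2) this S(1)] have "Z_independent B (h ` S)" "card (h ` S) = n"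
      using S(2) by simp_all
    then show "n \<in> {card S | S. Z_independent B S}" by blast
  qed
  have "K \<cong> H" using iso H by (simp add: comm_group_def group.iso_sym)
  have eqset: "{card S | S. Z_independent H S} = {card S | S. Z_independent K S}"
    by (rule subset_antisym[OF sub[OF H K iso] sub[OF K H \<open>K \<cong> H\<close>]])
  show ?thesis unfolding group_rank_def eqset ..
qed

lemma euler_char_homeo:
  assumes "X homeomorphic_space Y"
  shows "euler_char X = euler_char Y"
proof -
  have "\<And>p. betti p X = betti p Y"
    unfolding betti_def
    by (rule group_rank_iso[OF abelian_homology_group abelian_homology_group
          homeomorphic_space_imp_isomorphic_homology_groups[OF assms]])
  then show ?thesis unfolding euler_char_def by simp
qed



lemma bij_comp_right: "bij (\<sigma>::'v \<Rightarrow> 'v) \<Longrightarrow> bij (\<lambda>l::'v \<Rightarrow> 'a. l \<circ> \<sigma>)"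
  apply (rule bij_betw_byWitness[where f'="\<lambda>l. l \<circ> Hilbert_Choice.inv \<sigma>"])
  by (auto simp: fun_eq_iff bij_inv_eq_iff o_def bij_def surj_f_inv_f)

lemma comp_inv_eq: "bij \<sigma> \<Longrightarrow> (a \<circ> Hilbert_Choice.inv \<sigma> = b) \<longleftrightarrow> (a = b \<circ> \<sigma>)"
proof -
  assume b: "bij \<sigma>"
  have 1: "Hilbert_Choice.inv \<sigma> \<circ> \<sigma> = id" using b by (simp add: bij_is_inj)
  have 2: "\<sigma> \<circ> Hilbert_Choice.inv \<sigma> = id" using b bij_is_surj surj_iff by blast
  show ?thesis using 1 2 by (metis comp_assoc comp_id)
qed

lemma lookup_lact:
  assumes "bij \<sigma>"
  shows "Poly_Mapping.lookup (lact \<sigma> f) b = Poly_Mapping.lookup f (b \<circ> \<sigma>)"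
proof -
  have key: "(a \<circ> Hilbert_Choice.inv \<sigma> = b) \<longleftrightarrow> (a = b \<circ> \<sigma>)" for a :: "'a \<Rightarrow> int"
    using comp_inv_eq[OF assms] .
  have "Poly_Mapping.lookup (lact \<sigma> f) b =
      (\<Sum>a\<in>Poly_Mapping.keys f. (Poly_Mapping.lookup f a when a = b \<circ> \<sigma>))"
    unfolding lact_def lookup_sum lookup_single key by simp
  also have "\<dots> = Poly_Mapping.lookup f (b \<circ> \<sigma>)"
    by (cases "b \<circ> \<sigma> \<in> Poly_Mapping.keys f")
       (simp_all add: when_def sum.delta' in_keys_iff)
  finally show ?thesis .
qed

lemma lact_add: "bij \<sigma> \<Longrightarrow> lact \<sigma> (f + g) = lact \<sigma> f + lact \<sigma> g"
  by (rule poly_mapping_eqI) (simp add: lookup_lact lookup_add)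

lemma lact_zero: "bij \<sigma> \<Longrightarrow> lact \<sigma> 0 = 0"
  by (rule poly_mapping_eqI) (simp add: lookup_lact)

lemma lact_sum: "bij \<sigma> \<Longrightarrow> lact \<sigma> (\<Sum>x\<in>A. F x) = (\<Sum>x\<in>A. lact \<sigma> (F x))"
  by (induction A rule: infinite_finite_induct) (simp_all add: lact_add lact_zero)

lemma lact_single: "bij \<sigma> \<Longrightarrow> lact \<sigma> (Poly_Mapping.single a c) = Poly_Mapping.single (a \<circ> Hilbert_Choice.inv \<sigma>) c"
  by (rule poly_mapping_eqI) (simp only: lookup_lact lookup_single comp_inv_eq)

lemma lact_mult:
  assumes \<sigma>: "bij \<sigma>"
  shows "lact \<sigma> (f * g) = lact \<sigma> f * lact \<sigma> g"
proof (rule poly_mapping_eqI)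
  fix k :: "'a \<Rightarrow> int"
  have sur: "\<And>x y. x \<circ> \<sigma> = y \<circ> \<sigma> \<longleftrightarrow> x = y"
    using \<sigma> by (metis bij_comp_right bij_is_inj inj_eq)
  have inner: "Sum_any (\<lambda>q. Poly_Mapping.lookup g q when k \<circ> \<sigma> = (l \<circ> \<sigma>) + q)
      = Sum_any (\<lambda>q. Poly_Mapping.lookup g (q \<circ> \<sigma>) when k = l + q)" for l
  proof (rule Sum_any.reindex_cong[OF bij_comp_right[OF \<sigma>]])
    show "(\<lambda>q. Poly_Mapping.lookup g q when k \<circ> \<sigma> = (l \<circ> \<sigma>) + q) \<circ> (\<lambda>q. q \<circ> \<sigma>) =
        (\<lambda>q. Poly_Mapping.lookup g (q \<circ> \<sigma>) when k = l + q)"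
    proof (rule ext)
      fix q :: "'a \<Rightarrow> int"
      have pc: "(l + q) \<circ> \<sigma> = (l \<circ> \<sigma>) + (q \<circ> \<sigma>)" by (simp add: fun_eq_iff)
      have "(k \<circ> \<sigma> = (l \<circ> \<sigma>) + (q \<circ> \<sigma>)) = (k = l + q)" using sur[of k "l + q"] by (simp only: pc)
      then show "((\<lambda>q. Poly_Mapping.lookup g q when k \<circ> \<sigma> = (l \<circ> \<sigma>) + q) \<circ> (\<lambda>q. q \<circ> \<sigma>)) q =
          (Poly_Mapping.lookup g (q \<circ> \<sigma>) when k = l + q)"
        by (subst comp_apply) (simp only: \<open>(k \<circ> \<sigma> = (l \<circ> \<sigma>) + (q \<circ> \<sigma>)) = (k = l + q)\<close>)
    qed
  qed
  have "Poly_Mapping.lookup (lact \<sigma> (f * g)) k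
      = Sum_any (\<lambda>l. Poly_Mapping.lookup f l * Sum_any (\<lambda>q. Poly_Mapping.lookup g q when k \<circ> \<sigma> = l + q))"
    by (simp add: lookup_lact[OF \<sigma>] lookup_mult)
  also have "\<dots> = Sum_any (\<lambda>l. Poly_Mapping.lookup f (l \<circ> \<sigma>) * Sum_any (\<lambda>q. Poly_Mapping.lookup g (q \<circ> \<sigma>) when k = l + q))"
    by (rule Sum_any.reindex_cong[OF bij_comp_right[OF \<sigma>]], rule ext) (simp only: comp_apply inner)
  also have "\<dots> = Poly_Mapping.lookup (lact \<sigma> f * lact \<sigma> g) k"
    by (simp add: lookup_lact[OF \<sigma>] lookup_mult)
  finally show "Poly_Mapping.lookup (lact \<sigma> (f * g)) k = Poly_Mapping.lookup (lact \<sigma> f * lact \<sigma> g) k" .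
qed

lemma euler_form_perm:
  fixes src tgt :: "'e::finite \<Rightarrow> 'v::finite"
  assumes p: "bij p" and q: "bij q"
    and s: "\<And>\<alpha>. src (q \<alpha>) = p (src \<alpha>)" and t: "\<And>\<alpha>. tgt (q \<alpha>) = p (tgt \<alpha>)"
  shows "euler_form src tgt (a \<circ> p) (b \<circ> p) = euler_form src tgt a b"
proof -
  have 1: "(\<Sum>i\<in>UNIV. (a \<circ> p) i * (b \<circ> p) i) = (\<Sum>i\<in>UNIV. a i * b i)"
    using sum.reindex[of p UNIV "\<lambda>i. a i * b i"] p by (simp add: bij_def)
  have 2: "(\<Sum>\<alpha>\<in>UNIV. (a \<circ> p) (src \<alpha>) * (b \<circ> p) (tgt \<alpha>)) = (\<Sum>\<alpha>\<in>UNIV. a (src \<alpha>) * b (tgt \<alpha>))"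
    using sum.reindex[of q UNIV "\<lambda>\<alpha>. a (src \<alpha>) * b (tgt \<alpha>)"] q by (simp add: bij_def s t)
  show ?thesis unfolding euler_form_def using 1 2 by simp
qed

lemma grass_perm:
  assumes s: "\<And>\<alpha>. src (q \<alpha>) = p (src \<alpha>)" and t: "\<And>\<alpha>. tgt (q \<alpha>) = p (tgt \<alpha>)"
    and P: "P \<in> grass_set src tgt M e"
  shows "P \<circ> p \<in> grass_set src tgt (fst M \<circ> p, snd M \<circ> q) (e \<circ> p)"
proof -
  have pr: "\<forall>i. is_proj (fst M i) (e i) (P i)"
    and ar: "\<forall>a. let ds = fst M (src a); dt = fst M (tgt a); A = snd M a;
              AP = (\<lambda>r c. \<Sum>l<ds. A r l * P (src a) l c) in
          \<forall>r<dt. \<forall>c<ds. (\<Sum>k<dt. P (tgt a) r k * AP k c) = AP r c"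
    using P unfolding grass_set_def by auto
  show ?thesis unfolding grass_set_def
  proof (intro CollectI conjI allI)
    fix i show "is_proj (fst (fst M \<circ> p, snd M \<circ> q) i) ((e \<circ> p) i) ((P \<circ> p) i)" using pr by simp
  next
    fix a
    show "let ds = fst (fst M \<circ> p, snd M \<circ> q) (src a); dt = fst (fst M \<circ> p, snd M \<circ> q) (tgt a);
         A = snd (fst M \<circ> p, snd M \<circ> q) a; AP = \<lambda>r c. \<Sum>l<ds. A r l * (P \<circ> p) (src a) l c
     in \<forall>r<dt. \<forall>c<ds. (\<Sum>k<dt. (P \<circ> p) (tgt a) r k * AP k c) = AP r c"
      using ar[rule_format, of "q a"] by (simp add: s t Let_def)
  qed
qed

lemma homeo_comp:
  fixes p p' :: "'v \<Rightarrow> 'v"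
  assumes "p \<circ> p' = id" "p' \<circ> p = id"
  shows "homeomorphic_maps matrix_tuple_topology matrix_tuple_topology (\<lambda>P. P \<circ> p) (\<lambda>P. P \<circ> p')"
proof -
  have c: "continuous_map matrix_tuple_topology matrix_tuple_topology (\<lambda>P::'v \<Rightarrow> nat \<Rightarrow> nat \<Rightarrow> complex. P \<circ> q)" for q :: "'v \<Rightarrow> 'v"
    unfolding matrix_tuple_topology_def
    apply (subst continuous_map_componentwise_UNIV)
    apply (intro allI)
    apply (simp only: o_def)
    apply (rule continuous_map_product_projection)
    by simp
  show ?thesis unfolding homeomorphic_maps_def using assms by (simp add: c o_assoc[symmetric])
qed


lemma unitvec_perm:
  assumes "\<And>x. \<sigma>' (\<sigma> x) = x" "\<And>x. \<sigma> (\<sigma>' x) = x"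
  shows "unitvec i = unitvec (\<sigma>' i) \<circ> \<sigma>'"
  unfolding unitvec_def using assms by (auto simp: fun_eq_iff) (metis assms(1))

theorem mainTheorem15:
  fixes G :: "('g, 'b) monoid_scheme"
    and vact :: "'g \<Rightarrow> 'v::finite \<Rightarrow> 'v" and aact :: "'g \<Rightarrow> 'e::finite \<Rightarrow> 'e"
    and src tgt :: "'e \<Rightarrow> 'v"
    and M :: "('v, 'e) cc_obj" and g :: 'g
  assumes "acyclic_quiver src tgt"
    and "admissible_action G vact aact src tgt"
    and "g \<in> carrier G"
  shows "CC src tgt (obj_act G vact aact g M) = lact (vact g) (CC src tgt M)"
proof -
  have qa: "quiver_group_action G vact aact src tgt"
    using assms(2) unfolding admissible_action_def by simp
  have grp: "group G" using qa unfolding quiver_group_action_def by simp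
  define h where "h = inv\<^bsub>G\<^esub> g"
  have hc: "h \<in> carrier G" using grp assms(3) by (simp add: h_def group.inv_closed)
  define \<sigma> where "\<sigma> = vact g"
  define \<sigma>' where "\<sigma>' = vact h"
  define \<tau> where "\<tau> = aact g"
  define \<tau>' where "\<tau>' = aact h"
  have gh: "g \<otimes>\<^bsub>G\<^esub> h = \<one>\<^bsub>G\<^esub>" "h \<otimes>\<^bsub>G\<^esub> g = \<one>\<^bsub>G\<^esub>"
    using grp assms(3) by (simp_all add: h_def group.r_inv group.l_inv)
  have c1: "\<sigma> \<circ> \<sigma>' = id" "\<sigma>' \<circ> \<sigma> = id" "\<tau> \<circ> \<tau>' = id" "\<tau>' \<circ> \<tau> = id"
    using qa assms(3) hc gh unfolding quiver_group_action_def \<sigma>_def \<sigma>'_def \<tau>_def \<tau>'_def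
    by metis+
  have s1: "\<And>x. \<sigma> (\<sigma>' x) = x" "\<And>x. \<sigma>' (\<sigma> x) = x"
    using c1 by (metis comp_apply id_apply)+
  have bs: "bij \<sigma>" "bij \<sigma>'" "bij \<tau>'"
    using qa assms(3) hc unfolding quiver_group_action_def \<sigma>_def \<sigma>'_def \<tau>'_def by blast+
  have invs: "Hilbert_Choice.inv \<sigma> = \<sigma>'" using c1 by (simp add: inv_unique_comp)
  have st': "\<And>\<alpha>. src (\<tau>' \<alpha>) = \<sigma>' (src \<alpha>)" "\<And>\<alpha>. tgt (\<tau>' \<alpha>) = \<sigma>' (tgt \<alpha>)"
    using qa hc unfolding quiver_group_action_def \<sigma>'_def \<tau>'_def by blast+
  have st: "\<And>\<alpha>. src (\<tau> \<alpha>) = \<sigma> (src \<alpha>)" "\<And>\<alpha>. tgt (\<tau> \<alpha>) = \<sigma> (tgt \<alpha>)"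
    using qa assms(3) unfolding quiver_group_action_def \<sigma>_def \<tau>_def by blast+
  obtain R m where M: "M = (R, m)" by (cases M)
  define R' where "R' = (fst R \<circ> \<sigma>', snd R \<circ> \<tau>')"
  have act: "obj_act G vact aact g M = (R', m \<circ> \<sigma>')"
    unfolding obj_act_def rep_act_def M R'_def \<sigma>'_def \<tau>'_def h_def by simp
  define Ex where "Ex = (\<lambda>(R::('v,'e) qrep) (e::'v \<Rightarrow> nat) i. - euler_form src tgt (int \<circ> e) (unitvec i)
            - euler_form src tgt (unitvec i) (\<lambda>j. int (fst R j) - int (e j)))"
  have CCm: "CC_module src tgt R = (\<Sum>e\<in>{e. \<forall>i. e i \<le> fst R i}.
       Poly_Mapping.single (Ex R e) (euler_char (quiver_grassmannian src tgt R e)))" for R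
    unfolding CC_module_def Ex_def by simp
  have exeq: "Ex R' (e0 \<circ> \<sigma>') = Ex R e0 \<circ> \<sigma>'" for e0
  proof
    fix i
    have u: "unitvec i = unitvec (\<sigma>' i) \<circ> \<sigma>'" by (rule unitvec_perm) (use s1 in auto)
    have d: "(\<lambda>j. int (fst R' j) - int (e0 (\<sigma>' j))) = (\<lambda>j. int (fst R j) - int (e0 j)) \<circ> \<sigma>'"
      by (simp add: R'_def fun_eq_iff)
    have e: "int \<circ> (e0 \<circ> \<sigma>') = (int \<circ> e0) \<circ> \<sigma>'" by (simp add: o_assoc)
    show "Ex R' (e0 \<circ> \<sigma>') i = (Ex R e0 \<circ> \<sigma>') i"
      unfolding Ex_def split_def
      apply (simp only: u d e euler_form_perm[where src=src and tgt=tgt, OF bs(2) bs(3) st'] comp_apply)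
      done
  qed
  have chi: "euler_char (quiver_grassmannian src tgt R' (e0 \<circ> \<sigma>')) = euler_char (quiver_grassmannian src tgt R e0)" for e0
  proof -
    have "homeomorphic_maps (quiver_grassmannian src tgt R e0) (quiver_grassmannian src tgt R' (e0 \<circ> \<sigma>'))
            (\<lambda>P. P \<circ> \<sigma>') (\<lambda>P. P \<circ> \<sigma>)"
      unfolding quiver_grassmannian_def
    proof (rule homeomorphic_maps_subtopologies_alt[OF homeo_comp[OF c1(2) c1(1)]])
      show "(\<lambda>P. P \<circ> \<sigma>') ` (topspace matrix_tuple_topology \<inter> grass_set src tgt R e0)
            \<subseteq> grass_set src tgt R' (e0 \<circ> \<sigma>')"
        unfolding R'_def using grass_perm[where src=src and tgt=tgt, OF st'] by blast
      have "Q \<circ> \<sigma> \<in> grass_set src tgt R e0" if "Q \<in> grass_set src tgt R' (e0 \<circ> \<sigma>')" for Q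
      proof -
        have "Q \<circ> \<sigma> \<in> grass_set src tgt (fst R' \<circ> \<sigma>, snd R' \<circ> \<tau>) (e0 \<circ> \<sigma>' \<circ> \<sigma>)"
          using grass_perm[where src=src and tgt=tgt, OF st that] by simp
        also have "(fst R' \<circ> \<sigma>, snd R' \<circ> \<tau>) = R"
          using c1 by (simp add: R'_def o_assoc[symmetric])
        also have "e0 \<circ> \<sigma>' \<circ> \<sigma> = e0" using c1 by (simp add: o_assoc[symmetric])
        finally show ?thesis .
      qed
      then show "(\<lambda>P. P \<circ> \<sigma>) ` (topspace matrix_tuple_topology \<inter> grass_set src tgt R' (e0 \<circ> \<sigma>'))
            \<subseteq> grass_set src tgt R e0" by blast
    qed
    then have "quiver_grassmannian src tgt R e0 homeomorphic_space quiver_grassmannian src tgt R' (e0 \<circ> \<sigma>')"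
      unfolding homeomorphic_space_def by blast
    then show ?thesis using euler_char_homeo by metis
  qed
  have sumeq: "CC_module src tgt R' = lact \<sigma> (CC_module src tgt R)"
  proof -
    have "lact \<sigma> (CC_module src tgt R) = (\<Sum>e\<in>{e. \<forall>i. e i \<le> fst R i}.
       Poly_Mapping.single (Ex R e \<circ> \<sigma>') (euler_char (quiver_grassmannian src tgt R e)))"
      unfolding CCm by (simp add: lact_sum[OF bs(1)] lact_single[OF bs(1)] invs)
    also have "\<dots> = (\<Sum>e\<in>{e. \<forall>i. e i \<le> fst R' i}.
       Poly_Mapping.single (Ex R' e) (euler_char (quiver_grassmannian src tgt R' e)))"
    proof (rule sum.reindex_bij_witness[where j = "\<lambda>e. e \<circ> \<sigma>'" and i = "\<lambda>e. e \<circ> \<sigma>"])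
      show "\<And>a. a \<in> {e. \<forall>i. e i \<le> fst R i} \<Longrightarrow> a \<circ> \<sigma>' \<circ> \<sigma> = a"
        using c1 by (simp add: o_assoc[symmetric])
      show "\<And>a. a \<in> {e. \<forall>i. e i \<le> fst R' i} \<Longrightarrow> a \<circ> \<sigma> \<circ> \<sigma>' = a"
        using c1 by (simp add: o_assoc[symmetric])
      show "\<And>a. a \<in> {e. \<forall>i. e i \<le> fst R i} \<Longrightarrow> a \<circ> \<sigma>' \<in> {e. \<forall>i. e i \<le> fst R' i}"
        by (simp add: R'_def)
      show "\<And>a. a \<in> {e. \<forall>i. e i \<le> fst R' i} \<Longrightarrow> a \<circ> \<sigma> \<in> {e. \<forall>i. e i \<le> fst R i}"
        by (simp add: R'_def) (metis s1(2))
      show "\<And>a. a \<in> {e. \<forall>i. e i \<le> fst R i} \<Longrightarrow>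
         Poly_Mapping.single (Ex R' (a \<circ> \<sigma>')) (euler_char (quiver_grassmannian src tgt R' (a \<circ> \<sigma>'))) =
         Poly_Mapping.single (Ex R a \<circ> \<sigma>') (euler_char (quiver_grassmannian src tgt R a))"
        by (simp only: exeq chi)
    qed
    also have "\<dots> = CC_module src tgt R'" unfolding CCm ..
    finally show ?thesis by simp
  qed
  have lm: "lact \<sigma> (lmonom (int \<circ> m)) = lmonom (int \<circ> (m \<circ> \<sigma>'))"
    unfolding lmonom_def by (simp add: lact_single[OF bs(1)] invs o_assoc)
  show ?thesis
    unfolding act unfolding M CC_def
    by (simp only: fst_conv snd_conv sumeq lact_mult[OF bs(1)] lm flip: \<sigma>_def)
qed

end
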